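(* Let $(P_n(x))_{n \ge 0}$ be a splitting sequence with binary string $s_0 s_1 s_2 \ldots$, and let $m \in \mathbb{N}_0$ be such that $P_m(x)$ is irreducible in $\mathbb{Z}[x]$. Then for every $k \in \mathbb{N}_0$, $P_{m+k}(x)$ divides $P_m(x^{2^\ell})$ in $\mathbb{Z}[x]$, where $\ell = |\{ i \in \{m, \dots, m+k-1\} : s_i = L\}|$.
   Context: Splitting sequence of an irreducible $P \in \mathbb{Z}[x]$: a sequence $(P_n)_{n \ge 0}$ in $\mathbb{Z}[x]$ with $P_0 = P$ such that for each $n$: if $P_n$ is irreducible in $\mathbb{Z}[x]$, then $P_{n+1}(x) = P_n(x^2)$; if $P_n$ is reducible, then (as $n \ge 1$, $P_{n-1}$ is irreducible and $P_n(x) = P_{n-1}(x^2)$ factors in $\mathbb{Z}[x]$ as a product of exactly two irreducibles) $P_{n+1}$ is one of these two irreducible factors. Its binary string is $s_0 s_1 \ldots$ with $s_n = L$ if $P_n$ is irreducible and $s_n = S$ otherwise. *)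

theory Defs
  imports "HOL-Computational_Algebra.Polynomial_Factorial"
begin

definition sq_subst :: "int poly \<Rightarrow> int poly" where
  "sq_subst p = pcompose p (monom 1 2)"

definition splitting_seq :: "(nat \<Rightarrow> int poly) \<Rightarrow> bool" where
  "splitting_seq P \<longleftrightarrow> irreducible (P 0) \<and>
     (\<forall>n. (irreducible (P n) \<longrightarrow> P (Suc n) = sq_subst (P n)) \<and>
          (\<not> irreducible (P n) \<longrightarrow>
             (\<exists>A B. irreducible A \<and> irreducible B \<and> P n = A * B \<and>
                    (P (Suc n) = A \<or> P (Suc n) = B))))"

datatype letter = L | S

definition split_string :: "(nat \<Rightarrow> int poly) \<Rightarrow> nat \<Rightarrow> letter" where
  "split_string P n = (if irreducible (P n) then L else S)"

end

theory Submission
  imports Defs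
begin

lemma monom_pcompose_monom: "pcompose (monom (1::int) a) (monom 1 2) = monom 1 (2 * a)"
proof (induction a)
  case 0 then show ?case by (simp add: one_pCons)
next
  case (Suc a)
  have "monom (1::int) (Suc a) = [:0,1:] * monom 1 a"
    by (simp add: monom_Suc)
  then have "pcompose (monom (1::int) (Suc a)) (monom 1 2) = monom 1 2 * monom 1 (2*a)"
    by (simp add: pcompose_mult Suc pcompose_pCons)
  then show ?case by (simp add: mult_monom)
qed

lemma dvd_pcompose: "(p::int poly) dvd q \<Longrightarrow> pcompose p r dvd pcompose q r"
  by (metis dvdE dvd_triv_left pcompose_mult)

theorem lemma3p14:
  fixes P :: "nat \<Rightarrow> int poly" and m k :: nat
  assumes "splitting_seq P"
    and "irreducible (P m)"
  shows "P (m + k) dvd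
           pcompose (P m)
             (monom 1 (2 ^ card {i \<in> {m..<m + k}. split_string P i = L}))"
proof (induction k)
  case 0
  have "monom (1::int) 1 = [:0,1:]" by (simp add: monom_Suc one_pCons)
  then show ?case by simp
next
  case (Suc k)
  define l where "l = card {i \<in> {m..<m + k}. split_string P i = L}"
  have IH: "P (m+k) dvd pcompose (P m) (monom 1 (2^l))" using Suc l_def by simp
  have set: "{i \<in> {m..<m + Suc k}. split_string P i = L} =
     (if split_string P (m+k) = L then insert (m+k) {i \<in> {m..<m + k}. split_string P i = L}
      else {i \<in> {m..<m + k}. split_string P i = L})"
    by (auto simp: less_Suc_eq)
  show ?case
  proof (cases "irreducible (P (m+k))")
    case True
    then have nx: "P (Suc (m+k)) = pcompose (P (m+k)) (monom 1 2)"
      using assms(1) by (simp add: splitting_seq_def sq_subst_def)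
    have c: "card {i \<in> {m..<m + Suc k}. split_string P i = L} = Suc l"
      using True unfolding set l_def by (simp add: split_string_def)
    have "P (Suc (m+k)) dvd pcompose (pcompose (P m) (monom 1 (2^l))) (monom 1 2)"
      using nx IH dvd_pcompose by simp
    also have "\<dots> = pcompose (P m) (monom 1 (2^Suc l))"
      by (simp add: pcompose_assoc[symmetric] monom_pcompose_monom)
    finally show ?thesis using c by simp
  next
    case False
    then obtain A B where "P (m+k) = A * B" "P (Suc (m+k)) = A \<or> P (Suc (m+k)) = B"
      using assms(1) unfolding splitting_seq_def by blast
    then have d: "P (Suc (m+k)) dvd P (m+k)" by auto
    have c: "card {i \<in> {m..<m + Suc k}. split_string P i = L} = l"
      using False unfolding set l_def by (simp add: split_string_def)
    show ?thesis using c d IH dvd_trans by simp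
  qed
qed

end
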